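(* In the elastoplastic setting described in the context, let $(\mathbf{a},\mathbf{b},\mathbf{c})\in\mathbb{R}^{dM}\times\mathbb{R}^{LN}\times\mathbb{R}^{LN}$ be arbitrary and $\mathbf{H}\in\partial\mathbf{F}(\mathbf{a},\mathbf{b},\mathbf{c})$, written as $\mathbf{H}=\begin{pmatrix}\mathbf{A}&\mathbf{B}&\mathbf{0}\\ \mathbf{B}^\top&\mathbf{C}&\mathbf{D}\\ \mathbf{0}&\mathbf{X}&\mathbf{Y}\end{pmatrix}$ with $\mathbf{X}=\operatorname{diag}(\mathbf{X}_1,\dots,\mathbf{X}_N)$, $\mathbf{Y}=\operatorname{diag}(\mathbf{Y}_1,\dots,\mathbf{Y}_N)$. Then for each $i\in\{1,\dots,N\}$ there is $\tau_i\in[0,1]$ such that $$\mathbf{X}_i=\tau_i\,\varrho\,\mathbf{c}_i\otimes\frac{\mathbf{v}_{\varrho,i}}{|\mathbf{v}_{\varrho,i}|}-\varrho\,\sigma_i\,\mathbf{I}_{L\times L},\qquad \mathbf{Y}_i=\tau_i\Big(\mathbf{c}_i\otimes\frac{\mathbf{v}_{\varrho,i}}{|\mathbf{v}_{\varrho,i}|}+(|\mathbf{v}_{\varrho,i}|-\sigma_i)\mathbf{I}_{L\times L}\Big),$$ where $\mathbf{v}_{\varrho,i}:=\mathbf{c}_i+\varrho\mathbf{b}_i$. Specifically, if $|\mathbf{v}_{\varrho,i}|<\sigma_i$ then $\tau_i=0$ (i.e. $\mathbf{X}_i=-\varrho\sigma_i\mathbf{I}_{L\times L}$, $\mathbf{Y}_i=\mathbf{0}$),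 and if $|\mathbf{v}_{\varrho,i}|>\sigma_i$ then $\tau_i=1$.
   Context: Elastoplastic setting. Let $d\in\{2,3\}$, $\Omega\subset\mathbb{R}^d$ a bounded polygonal domain with Lipschitz boundary $\Gamma$, $\Gamma_D\subseteq\Gamma$ closed with positive surface measure, $\Gamma_N=\Gamma\setminus\Gamma_D$. $\mathbb{S}_{d,0}$ denotes the symmetric trace-free $d\times d$ matrices with Frobenius inner product $\mathbf{p}:\mathbf{q}=\sum p_{ij}q_{ij}$. $\mathbb{C},\mathbb{H}$ are fourth-order elasticity and hardening tensors with the usual symmetries, uniformly elliptic and bounded; $\sigma_y>0$ is a constant yield stress. $V=\{\mathbf{v}\in H^1(\Omega,\mathbb{R}^d):\mathbf{v}|_{\Gamma_D}=\mathbf{0}\}$, $\mathbf{f}\in V^*$, $\mathbf{g}\in H^{-1/2}(\Gamma_N,\mathbb{R}^d)$, $\ell(\mathbf{v})=\langle\mathbf{f},\mathbf{v}\rangle+\langle\mathbf{g},\mathbf{v}\rangle_{\Gamma_N}$, and $a((\mathbf{u},\mathbf{p}),(\mathbf{v},\mathbf{q}))=\int_\Omega\mathbb{C}(\boldsymbol\varepsilon(\mathbf{u})-\mathbf{p}):(\boldsymbol\varepsilon(\mathbf{v})-\mathbf{q})\,dx+\int_\Omega\mathbb{H}\mathbf{p}:\mathbf{q}\,dx$ with $\boldsymbol\varepsilon(\mathbf{u})=\tfrac12(\nabla\mathbf{u}+\nabla\mathbf{u}^\top)$. Let $\mathcal{T}_h$ be a locally quasi-uniform mesh of convex shape-regular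 quadrilaterals/hexahedra with bi/trilinear bijections $\mathbf{M}_T:[-1,1]^d\to T$, polynomial degrees $p_T\ge1$; $\mathbb{P}_p(\hat T)$ denotes polynomials of degree at most $p$ in each variable on $\hat T=[-1,1]^d$. $V_{hp}=\{\mathbf{v}\in V:\mathbf{v}|_T\circ\mathbf{M}_T\in\mathbb{P}_{p_T}(\hat T)^d\ \forall T\}$ with basis $\{\mathbf{e}_k\vartheta_i:k\le d,\,i\le M\}$. For each $T$, let $\hat{\mathbf{x}}_{k,T}$, $k=1,\dots,n_T:=p_T^d$, be the tensor-product Gauss points on $\hat T$ and $\hat\phi_{k,T}\in\mathbb{P}_{p_T-1}(\hat T)$ the Lagrange basis with $\hat\phi_{k,T}(\hat{\mathbf{x}}_{l,T})=\delta_{kl}$; $\phi_1,\dots,\phi_N$ ($N=\sum_Tn_T$, one-to-one numbering) equal $\hat\phi_{k,T}\circ\mathbf{M}_T^{-1}$ on $T$ and $0$ elsewhere. $D_i:=\int_\Omega\phi_i\,dx>0$, $\sigma_i:=D_i^{-1}\int_\Omega\sigma_y\phi_i\,dx$. $L:=\tfrac12(d-1)(d+2)$ and $\boldsymbol\Phi_1,\dots,\boldsymbol\Phi_L$ is the Frobenius-orthonormal basis of $\mathbb{S}_{d,0}$ given for $d=2$ by $\tfrac1{\sqrt2}\begin{pmatrix}1&0\\0&-1\end{pmatrix},\tfrac1{\sqrt2}\begin{pmatrix}0&1\\1&0\end{pmatrix}$ and for $d=3$ by $\tfrac1{\sqrt2}\operatorname{diag}(1,-1,0)$, $\tfrac1{\sqrt6}\operatorname{diag}(1,1,-2)$,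 and $\tfrac1{\sqrt2}(\mathbf{e}_1\mathbf{e}_2^\top+\mathbf{e}_2\mathbf{e}_1^\top)$, $\tfrac1{\sqrt2}(\mathbf{e}_1\mathbf{e}_3^\top+\mathbf{e}_3\mathbf{e}_1^\top)$, $\tfrac1{\sqrt2}(\mathbf{e}_2\mathbf{e}_3^\top+\mathbf{e}_3\mathbf{e}_2^\top)$. Matrices: $A_{d(i-1)+k,d(j-1)+l}=a((\mathbf{e}_l\vartheta_j,\mathbf{0}),(\mathbf{e}_k\vartheta_i,\mathbf{0}))$; $C_{L(i-1)+k,L(j-1)+l}=a((\mathbf{0},\boldsymbol\Phi_l\phi_i),(\mathbf{0},\boldsymbol\Phi_k\phi_j))$; $\mathbf{D}=\operatorname{diag}(D_1\mathbf{I}_{L\times L},\dots,D_N\mathbf{I}_{L\times L})$; $B_{d(i-1)+k,L(j-1)+l}=-a((\mathbf{0},\boldsymbol\Phi_l\phi_j),(\mathbf{e}_k\vartheta_i,\mathbf{0}))$ ($i\le M$, $j\le N$, $k\le d$, $l\le L$); $l_{d(i-1)+k}=-\ell(\mathbf{e}_k\vartheta_i)$. Fix $\varrho>0$. For $\mathbf{b},\mathbf{c}\in\mathbb{R}^{LN}$ let $\mathbf{b}_i=(b_{L(i-1)+1},\dots,b_{Li})^\top$, $\mathbf{c}_i$ analogously, $\mathbf{v}_{\varrho,i}=\mathbf{c}_i+\varrho\mathbf{b}_i$, and $\mathbf{S}_i(\mathbf{b}_i,\mathbf{c}_i)=\max\{\sigma_i,|\mathbf{v}_{\varrho,i}|\}\,\mathbf{c}_i-\sigma_i\mathbf{v}_{\varrho,i}\in\mathbb{R}^L$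 ($|\cdot|$ Euclidean norm). Then $\mathbf{F}(\mathbf{a},\mathbf{b},\mathbf{c})=(\mathbf{A}\mathbf{a}+\mathbf{B}\mathbf{b}+\mathbf{l},\ \mathbf{B}^\top\mathbf{a}+\mathbf{C}\mathbf{b}+\mathbf{D}\mathbf{c},\ \mathbf{S}_1(\mathbf{b}_1,\mathbf{c}_1),\dots,\mathbf{S}_N(\mathbf{b}_N,\mathbf{c}_N))$. $\partial\mathbf{F}$ is the Clarke subdifferential (convex hull of limits of Jacobians at nearby differentiability points); $\mathbf{x}\otimes\mathbf{y}=\mathbf{x}\mathbf{y}^\top$ is the dyadic product. *)

theory Defs
  imports "HOL-Analysis.Analysis"
begin

definition clarke_jacobian ::
  "('a::euclidean_space \<Rightarrow> 'b::euclidean_space) \<Rightarrow> 'a \<Rightarrow> ('a \<Rightarrow>\<^sub>L 'b) set" where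
  "clarke_jacobian F x = convex hull
     {J. \<exists>xs Js. (xs \<longlonglongrightarrow> x) \<and>
          (\<forall>k. (F has_derivative blinfun_apply (Js k)) (at (xs k))) \<and>
          (Js \<longlonglongrightarrow> J)}"

text \<open>Block i (in R^L) of a vector in R^{LN}; indices are pairs (node i, component k).\<close>
definition blk :: "real^('n::finite \<times> 'l::finite) \<Rightarrow> 'n \<Rightarrow> real^'l" where
  "blk b i = (\<chi> k. b $ (i, k))"

definition dyad :: "real^'l::finite \<Rightarrow> real^'l \<Rightarrow> real^'l^'l" where
  "dyad x y = (\<chi> p q. x $ p * y $ q)"

definition vrho :: "real \<Rightarrow> real^('n::finite \<times> 'l::finite) \<Rightarrow> real^('n \<times> 'l) \<Rightarrow> 'n \<Rightarrow> real^'l" where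
  "vrho rho b c i = blk c i + rho *\<^sub>R blk b i"

definition Sblk :: "real \<Rightarrow> ('n::finite \<Rightarrow> real) \<Rightarrow> real^('n \<times> 'l::finite) \<Rightarrow> real^('n \<times> 'l) \<Rightarrow> 'n \<Rightarrow> real^'l" where
  "Sblk rho sig b c i =
     max (sig i) (norm (vrho rho b c i)) *\<^sub>R blk c i - sig i *\<^sub>R vrho rho b c i"

definition Ddiag :: "('n::finite \<Rightarrow> real) \<Rightarrow> real^('n \<times> 'l::finite) \<Rightarrow> real^('n \<times> 'l)" where
  "Ddiag Dn c = (\<chi> p. Dn (fst p) * c $ p)"

definition elastoF ::
  "real^'m::finite^'m \<Rightarrow> real^('n::finite \<times> 'l::finite)^'m \<Rightarrow> real^('n \<times> 'l)^('n \<times> 'l) \<Rightarrow> ('n \<Rightarrow> real) \<Rightarrow> real^'m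
   \<Rightarrow> ('n \<Rightarrow> real) \<Rightarrow> real
   \<Rightarrow> (real^'m) \<times> (real^('n \<times> 'l)) \<times> (real^('n \<times> 'l)) \<Rightarrow> (real^'m) \<times> (real^('n \<times> 'l)) \<times> (real^('n \<times> 'l))" where
  "elastoF A B C Dn l sig rho = (\<lambda>(a, b, c).
     (A *v a + B *v b + l,
      transpose B *v a + C *v b + Ddiag Dn c,
      (\<chi> p. Sblk rho sig b c (fst p) $ snd p)))"

end

theory Submission
  imports Defs
begin


lemma blk_nth[simp]: "blk x i $ k = x $ (i,k)"
  by (simp add: blk_def)
lemma blk_add: "blk (x + y) i = blk x i + blk y i"
  by (simp add: vec_eq_iff)
lemma blk_scaleR: "blk (t *\<^sub>R x) i = t *\<^sub>R blk x i"
  by (simp add: vec_eq_iff)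
lemma vrho_line: "vrho rho (b + t *\<^sub>R db) (c + t *\<^sub>R dc) i
   = vrho rho b c i + t *\<^sub>R (blk dc i + rho *\<^sub>R blk db i)"
  by (simp add: vrho_def blk_add blk_scaleR algebra_simps)
lemma dyad_mv: "dyad x y *v w = (y \<bullet> w) *\<^sub>R x"
  by (simp add: vec_eq_iff matrix_vector_mult_def dyad_def inner_vec_def sum_distrib_left mult_ac)

definition Ef :: "real \<Rightarrow> ('n::finite \<Rightarrow> real) \<Rightarrow> ('n \<Rightarrow> real) \<Rightarrow> real^('n \<times> 'l::finite) \<Rightarrow> real^('n \<times> 'l)
   \<Rightarrow> real^('n \<times> 'l) \<Rightarrow> real^('n \<times> 'l) \<Rightarrow> 'n \<Rightarrow> 'l \<Rightarrow> real" where
  "Ef rho sig tau b c db dc i k = tau i * (c $ (i,k) * (((1 / norm (vrho rho b c i)) *\<^sub>R vrho rho b c i)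
      \<bullet> (blk dc i + rho *\<^sub>R blk db i)) + (norm (vrho rho b c i) - sig i) * dc $ (i,k))
      - rho * sig i * db $ (i,k)"

lemma formula_eq:
  "(((tau i * rho) *\<^sub>R dyad (blk c i) ((1 / norm (vrho rho b c i)) *\<^sub>R vrho rho b c i)
               - (rho * sig i) *\<^sub>R mat 1) *v blk db i) $ k
          + ((tau i *\<^sub>R (dyad (blk c i) ((1 / norm (vrho rho b c i)) *\<^sub>R vrho rho b c i)
               + (norm (vrho rho b c i) - sig i) *\<^sub>R mat 1)) *v blk dc i) $ k
   = Ef rho sig tau b c db dc i k"
  by (simp add: Ef_def matrix_vector_mult_diff_rdistrib matrix_vector_mult_add_rdistrib
      scaleR_matrix_vector_assoc[symmetric] dyad_mv inner_add_right algebra_simps)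

lemma Sline_eq: "Sblk rho sig (b + t *\<^sub>R db) (c + t *\<^sub>R dc) i $ k
  = max (sig i) (norm (vrho rho b c i + t *\<^sub>R (blk dc i + rho *\<^sub>R blk db i))) * (c$(i,k) + t * dc$(i,k))
    - sig i * (vrho rho b c i $ k + t * (blk dc i + rho *\<^sub>R blk db i) $ k)"
  by (simp add: Sblk_def vrho_line blk_add blk_scaleR algebra_simps)

lemma deriv_norm_line:
  assumes "v \<noteq> 0"
  shows "DERIV (\<lambda>t. norm (v + t *\<^sub>R w)) 0 :> (sgn v \<bullet> w)"
proof -
  have l: "((\<lambda>t::real. v + t *\<^sub>R w) has_derivative (\<lambda>t. t *\<^sub>R w)) (at 0)"
    by (auto intro!: derivative_eq_intros)
  have n: "(norm has_derivative (\<lambda>h. sgn v \<bullet> h)) (at ((\<lambda>t::real. v + t *\<^sub>R w) 0))"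
    using has_derivative_norm[OF assms] by (simp add: inner_commute)
  have "((norm \<circ> (\<lambda>t::real. v + t *\<^sub>R w)) has_derivative ((\<lambda>h. sgn v \<bullet> h) \<circ> (\<lambda>t. t *\<^sub>R w))) (at 0)"
    by (rule diff_chain_at[OF l n])
  then show ?thesis
    unfolding has_field_derivative_def
  proof -
    assume a: "((norm \<circ> (\<lambda>t::real. v + t *\<^sub>R w)) has_derivative ((\<lambda>h. sgn v \<bullet> h) \<circ> (\<lambda>t. t *\<^sub>R w))) (at 0)"
    have e: "((\<lambda>h. sgn v \<bullet> h) \<circ> (\<lambda>t. t *\<^sub>R w)) = (*) (sgn v \<bullet> w)"
      by (auto simp: fun_eq_iff)
    show "((\<lambda>t. norm (v + t *\<^sub>R w)) has_derivative (*) (sgn v \<bullet> w)) (at 0)"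
      using a unfolding e by (simp add: o_def)
  qed
qed

lemma S_deriv:
  fixes b c db dc :: "real^('n::finite \<times> 'l::finite)"
  assumes sp: "sig i > 0"
    and D: "DERIV (\<lambda>t. Sblk rho sig (b + t *\<^sub>R db) (c + t *\<^sub>R dc) i $ k) 0 :> D"
    and kink: "norm (vrho rho b c i) = sig i \<Longrightarrow> c $ (i,k) = 0"
  shows "D = Ef rho sig (\<lambda>j. if norm (vrho rho b c j) > sig j then 1 else 0) b c db dc i k"
proof -
  define v where "v = vrho rho b c i"
  define w where "w = blk dc i + rho *\<^sub>R blk db i"
  have phi: "(\<lambda>t. Sblk rho sig (b + t *\<^sub>R db) (c + t *\<^sub>R dc) i $ k)
     = (\<lambda>t. max (sig i) (norm (v + t *\<^sub>R w)) * (c$(i,k) + t * dc$(i,k)) - sig i * (v $ k + t * w $ k))"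
    unfolding v_def w_def by (rule ext, rule Sline_eq)
  have wk: "w $ k = dc $ (i,k) + rho * db $ (i,k)"
    by (simp add: w_def)
  have cont: "((\<lambda>t::real. norm (v + t *\<^sub>R w)) \<longlongrightarrow> norm (v + 0 *\<^sub>R w)) (nhds 0)"
    by (intro tendsto_intros filterlim_ident)
  consider "norm v < sig i" | "norm v > sig i" | "norm v = sig i" by linarith
  then show ?thesis
  proof cases
    case 1
    have ev: "eventually (\<lambda>t. norm (v + t *\<^sub>R w) < sig i) (nhds 0)"
      using order_tendstoD(2)[OF cont] 1 by simp
    have "DERIV (\<lambda>t. sig i * (c$(i,k) + t * dc$(i,k)) - sig i * (v $ k + t * w $ k)) 0 :> 
        sig i * dc$(i,k) - sig i * w $ k"
      by (auto intro!: derivative_eq_intros)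
    then have "DERIV (\<lambda>t. Sblk rho sig (b + t *\<^sub>R db) (c + t *\<^sub>R dc) i $ k) 0 :> 
        sig i * dc$(i,k) - sig i * w $ k"
      unfolding phi
      by (rule DERIV_cong_ev[THEN iffD2, rotated 3]) (use ev in \<open>auto elim!: eventually_mono\<close>)
    then have "D = sig i * dc$(i,k) - sig i * w $ k" using D DERIV_unique by blast
    then show ?thesis using 1 unfolding Ef_def v_def[symmetric] wk by (simp add: algebra_simps)
  next
    case 2
    have ev: "eventually (\<lambda>t. norm (v + t *\<^sub>R w) > sig i) (nhds 0)"
      using order_tendstoD(1)[OF cont] 2 by simp
    have v0: "v \<noteq> 0" using 2 sp by auto
    have "DERIV (\<lambda>t. norm (v + t *\<^sub>R w) * (c$(i,k) + t * dc$(i,k)) - sig i * (v $ k + t * w $ k)) 0 :> 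
        (sgn v \<bullet> w) * (c$(i,k) + 0 * dc$(i,k)) + norm (v + 0 *\<^sub>R w) * dc$(i,k) - sig i * w $ k"
      by (auto intro!: derivative_eq_intros deriv_norm_line[OF v0])
    then have "DERIV (\<lambda>t. Sblk rho sig (b + t *\<^sub>R db) (c + t *\<^sub>R dc) i $ k) 0 :> 
        (sgn v \<bullet> w) * (c$(i,k) + 0 * dc$(i,k)) + norm (v + 0 *\<^sub>R w) * dc$(i,k) - sig i * w $ k"
      unfolding phi
      by (rule DERIV_cong_ev[THEN iffD2, rotated 3]) (use ev in \<open>auto elim!: eventually_mono\<close>)
    then have "D = (sgn v \<bullet> w) * (c$(i,k) + 0 * dc$(i,k)) + norm (v + 0 *\<^sub>R w) * dc$(i,k) - sig i * w $ k"
      using D DERIV_unique by blast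
    then show ?thesis using 2 unfolding Ef_def v_def[symmetric] w_def[symmetric] wk
      by (simp add: algebra_simps sgn_div_norm divide_inverse)
  next
    case 3
    have c0: "c $ (i,k) = 0" using kink 3 unfolding v_def by simp
    define g where "g t = max (sig i) (norm (v + t *\<^sub>R w)) * dc$(i,k) - sig i * w $ k" for t
    define P where "P = (\<lambda>t. max (sig i) (norm (v + t *\<^sub>R w)) * (c$(i,k) + t * dc$(i,k)) - sig i * (v $ k + t * w $ k))"
    have "\<forall>z. P z - P 0 = g z * (z - 0)"
      unfolding P_def g_def using c0 3 by (simp add: algebra_simps)
    moreover have "isCont g 0" unfolding g_def by (intro continuous_intros)
    ultimately have "DERIV P 0 :> g 0"
      using CARAT_DERIV by blast
    then have "D = g 0" using D DERIV_unique unfolding phi P_def by blast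
    then show ?thesis using 3 unfolding Ef_def v_def[symmetric] wk g_def by (simp add: algebra_simps)
  qed
qed


lemma kink:
  fixes b c :: "real^('n::finite \<times> 'l::finite)"
  assumes sp: "sig i > 0" and nv: "norm (vrho rho b c i) = sig i"
    and D: "DERIV (\<lambda>t. Sblk rho sig (b + t *\<^sub>R 0) (c + t *\<^sub>R (\<chi> p. if fst p = i then vrho rho b c i $ snd p else 0)) i $ k) 0 :> D"
  shows "c $ (i,k) = 0"
proof -
  define v where "v = vrho rho b c i"
  define h0 :: "real^('n \<times> 'l)" where "h0 = (\<chi> p. if fst p = i then vrho rho b c i $ snd p else 0)"
  have bh: "blk h0 i = v" by (simp add: h0_def v_def vec_eq_iff)
  have h0k: "h0 $ (i,k) = v $ k" by (simp add: h0_def v_def)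
  define phi where "phi t = Sblk rho sig (b + t *\<^sub>R 0) (c + t *\<^sub>R h0) i $ k" for t
  have phi_eq: "phi t = max (sig i) (\<bar>1 + t\<bar> * sig i) * (c$(i,k) + t * v $ k) - sig i * ((1 + t) * v $ k)" for t
  proof -
    have z: "blk (0::real^('n \<times> 'l)) i = 0" by (simp add: vec_eq_iff)
    have "v + t *\<^sub>R (blk h0 i + rho *\<^sub>R blk 0 i) = (1 + t) *\<^sub>R v" unfolding bh z by (simp add: algebra_simps)
    then have n: "norm (v + t *\<^sub>R (blk h0 i + rho *\<^sub>R blk 0 i)) = \<bar>1 + t\<bar> * sig i"
      using nv unfolding v_def[symmetric] by simp
    show ?thesis
      unfolding phi_def Sline_eq v_def[symmetric] n unfolding bh z h0k
      by (simp add: algebra_simps)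
  qed
  have DD: "DERIV phi 0 :> D" using D unfolding phi_def h0_def by simp
  then have L: "((\<lambda>h. (phi (0 + h) - phi 0) / h) \<longlongrightarrow> D) (at 0)" by (simp add: DERIV_def)
  have R1: "((\<lambda>h. (phi (0 + h) - phi 0) / h) \<longlongrightarrow> D) (at_right 0)"
    by (rule tendsto_mono[OF at_le L]) simp
  have L1: "((\<lambda>h. (phi (0 + h) - phi 0) / h) \<longlongrightarrow> D) (at_left 0)"
    by (rule tendsto_mono[OF at_le L]) simp
  have R2: "((\<lambda>h::real. sig i * c$(i,k) + sig i * h * v $ k) \<longlongrightarrow> sig i * c$(i,k) + sig i * 0 * v $ k) (at_right 0)"
    by (intro tendsto_intros)
  have R3: "((\<lambda>h. (phi (0 + h) - phi 0) / h) \<longlongrightarrow> sig i * c$(i,k)) (at_right 0)"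
  proof (rule Lim_transform_eventually[OF R2[simplified]])
    show "\<forall>\<^sub>F x in at_right 0. sig i * c $ (i, k) + sig i * x * v $ k = (phi (0 + x) - phi 0) / x"
      using eventually_at_right_less[of 0]
    proof (rule eventually_mono)
      fix x :: real assume x: "0 < x"
      have "max (sig i) (\<bar>1 + x\<bar> * sig i) = (1 + x) * sig i" using x sp by (simp add: max_def)
      then show "sig i * c $ (i, k) + sig i * x * v $ k = (phi (0 + x) - phi 0) / x"
        using x by (simp add: phi_eq field_simps)
    qed
  qed
  have L3: "((\<lambda>h. (phi (0 + h) - phi 0) / h) \<longlongrightarrow> 0) (at_left 0)"
  proof (rule Lim_transform_eventually[OF tendsto_const])
    show "\<forall>\<^sub>F x in at_left 0. 0 = (phi (0 + x) - phi 0) / x"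
      using eventually_at_left_real[of "-1::real" 0, OF neg_less_0_iff_less[THEN iffD2, OF zero_less_one]]
    proof (rule eventually_mono)
      fix x :: real assume x: "x \<in> {-1<..<0}"
      have "max (sig i) (\<bar>1 + x\<bar> * sig i) = sig i" using x sp by (simp add: max_def)
      then show "0 = (phi (0 + x) - phi 0) / x"
        using x by (simp add: phi_eq field_simps)
    qed
  qed
  have "D = sig i * c$(i,k)" using tendsto_unique[OF _ R1 R3] by simp
  moreover have "D = 0" using tendsto_unique[OF _ L1 L3] by simp
  ultimately show ?thesis using sp by simp
qed


lemma dir_deriv:
  fixes F :: "'a::real_normed_vector \<Rightarrow> 'b::real_normed_vector"
  assumes F: "(F has_derivative f') (at x)" and g: "bounded_linear g"
  shows "DERIV (\<lambda>t. g (F (x + t *\<^sub>R h))) 0 :> g (f' h)"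
proof -
  have l: "((\<lambda>t::real. x + t *\<^sub>R h) has_derivative (\<lambda>t. t *\<^sub>R h)) (at 0)"
    by (auto intro!: derivative_eq_intros)
  have F0: "(F has_derivative f') (at ((\<lambda>t::real. x + t *\<^sub>R h) 0))" using F by simp
  have c: "((F \<circ> (\<lambda>t::real. x + t *\<^sub>R h)) has_derivative (f' \<circ> (\<lambda>t. t *\<^sub>R h))) (at 0)"
    by (rule diff_chain_at[OF l F0])
  have c2: "((\<lambda>t. g ((F \<circ> (\<lambda>t::real. x + t *\<^sub>R h)) t)) has_derivative (\<lambda>t. g ((f' \<circ> (\<lambda>t. t *\<^sub>R h)) t))) (at 0)"
    by (rule bounded_linear.has_derivative[OF g c])
  interpret f': bounded_linear f' using has_derivative_bounded_linear[OF F] .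
  interpret g: bounded_linear g by (rule g)
  have e: "(\<lambda>t. g ((f' \<circ> (\<lambda>t. t *\<^sub>R h)) t)) = (*) (g (f' h))"
    by (auto simp: fun_eq_iff f'.scale g.scale mult.commute)
  show ?thesis using c2 unfolding e has_field_derivative_def by (simp add: o_def)
qed

lemma vm_scaleR: "(t *\<^sub>R x) v* (M::real^'a::finite^'b::finite) = t *\<^sub>R (x v* M)"
  by (simp add: vector_matrix_mult_def vec_eq_iff sum_distrib_left mult_ac)
lemma vm_add: "(x + y) v* (M::real^'a::finite^'b::finite) = x v* M + y v* M"
  by (simp add: vector_matrix_mult_def vec_eq_iff sum.distrib algebra_simps)

lemma Ddiag_add: "Ddiag Dn (x + y) = Ddiag Dn x + Ddiag Dn y"
  by (simp add: Ddiag_def vec_eq_iff algebra_simps)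
lemma Ddiag_scaleR: "Ddiag Dn (t *\<^sub>R x) = t *\<^sub>R Ddiag Dn x"
  by (simp add: Ddiag_def vec_eq_iff algebra_simps)

definition Gf :: "real^'m::finite^'m \<Rightarrow> real^('n::finite \<times> 'l::finite)^'m \<Rightarrow> real^('n \<times> 'l)^('n \<times> 'l) \<Rightarrow> ('n \<Rightarrow> real)
   \<Rightarrow> real \<Rightarrow> ('n \<Rightarrow> real) \<Rightarrow> ('n \<Rightarrow> real) \<Rightarrow> real^('n \<times> 'l) \<Rightarrow> real^('n \<times> 'l)
   \<Rightarrow> (real^'m) \<times> (real^('n \<times> 'l)) \<times> (real^('n \<times> 'l)) \<Rightarrow> (real^'m) \<times> (real^('n \<times> 'l)) \<times> (real^('n \<times> 'l))" where
  "Gf A B C Dn rho sig tau b c x = (A *v fst x + B *v fst (snd x),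
     transpose B *v fst x + C *v fst (snd x) + Ddiag Dn (snd (snd x)),
     (\<chi> p. Ef rho sig tau b c (fst (snd x)) (snd (snd x)) (fst p) (snd p)))"

definition tcond :: "real \<Rightarrow> ('n::finite \<Rightarrow> real) \<Rightarrow> real^('n \<times> 'l::finite) \<Rightarrow> real^('n \<times> 'l) \<Rightarrow> ('n \<Rightarrow> real) \<Rightarrow> bool" where
  "tcond rho sig b c tau = (\<forall>i. 0 \<le> tau i \<and> tau i \<le> 1
        \<and> (norm (vrho rho b c i) < sig i \<longrightarrow> tau i = 0)
        \<and> (norm (vrho rho b c i) > sig i \<longrightarrow> tau i = 1))"

lemma deriv_char:
  fixes A :: "real^'m::finite^'m" and B :: "real^('n::finite \<times> 'l::finite)^'m" and C :: "real^('n \<times> 'l)^('n \<times> 'l)"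
    and Dn :: "'n \<Rightarrow> real" and l :: "real^'m" and sig :: "'n \<Rightarrow> real" and rho :: real
    and a :: "real^'m" and b c :: "real^('n \<times> 'l)"
  assumes sp: "\<And>i. sig i > 0"
    and F: "(elastoF A B C Dn l sig rho has_derivative f') (at (a, b, c))"
  shows "\<exists>tau. tcond rho sig b c tau \<and> (\<forall>x. f' x = Gf A B C Dn rho sig tau b c x)"
proof -
  define tau where "tau = (\<lambda>j. if norm (vrho rho b c j) > sig j then 1 else (0::real))"
  have tc: "tcond rho sig b c tau" unfolding tcond_def tau_def by auto
  have bl3: "bounded_linear (\<lambda>y::(real^'m) \<times> (real^('n \<times> 'l)) \<times> (real^('n \<times> 'l)). snd (snd y) $ p)" for p
    by (intro bounded_linear_compose[OF bounded_linear_vec_nth] bounded_linear_compose[OF bounded_linear_snd] bounded_linear_snd)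
  have bl2: "bounded_linear (\<lambda>y::(real^'m) \<times> (real^('n \<times> 'l)) \<times> (real^('n \<times> 'l)). fst (snd y) $ p)" for p
    by (intro bounded_linear_compose[OF bounded_linear_vec_nth] bounded_linear_compose[OF bounded_linear_fst] bounded_linear_snd)
  have bl1: "bounded_linear (\<lambda>y::(real^'m) \<times> (real^('n \<times> 'l)) \<times> (real^('n \<times> 'l)). fst y $ p)" for p
    by (intro bounded_linear_compose[OF bounded_linear_vec_nth] bounded_linear_fst)
  have kinkc: "c $ (i,k) = 0" if nv: "norm (vrho rho b c i) = sig i" for i k
  proof -
    define h0 :: "real^('n \<times> 'l)" where "h0 = (\<chi> p. if fst p = i then vrho rho b c i $ snd p else 0)"
    have d: "DERIV (\<lambda>t. snd (snd (elastoF A B C Dn l sig rho ((a, b, c) + t *\<^sub>R (0, 0, h0)))) $ (i,k)) 0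
        :> snd (snd (f' (0, 0, h0))) $ (i,k)"
      by (rule dir_deriv[OF F bl3])
    have e: "(\<lambda>t. snd (snd (elastoF A B C Dn l sig rho ((a, b, c) + t *\<^sub>R (0, 0, h0)))) $ (i,k))
       = (\<lambda>t. Sblk rho sig (b + t *\<^sub>R 0) (c + t *\<^sub>R h0) i $ k)"
      by (simp add: elastoF_def)
    have d': "DERIV (\<lambda>t. Sblk rho sig (b + t *\<^sub>R 0) (c + t *\<^sub>R h0) i $ k) 0 :> snd (snd (f' (0, 0, h0))) $ (i,k)"
      unfolding e[symmetric] by (rule d)
    show ?thesis by (rule kink[OF sp nv d'[unfolded h0_def]])
  qed
  have "f' x = Gf A B C Dn rho sig tau b c x" for x
  proof -
    obtain da db dc where x: "x = (da, db, dc)" by (cases x) auto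
    have line: "(a, b, c) + t *\<^sub>R x = (a + t *\<^sub>R da, b + t *\<^sub>R db, c + t *\<^sub>R dc)" for t
      by (simp add: x)
    have c1: "fst (f' x) $ j = (A *v da + B *v db) $ j" for j
    proof -
      have d: "DERIV (\<lambda>t. fst (elastoF A B C Dn l sig rho ((a, b, c) + t *\<^sub>R x)) $ j) 0 :> fst (f' x) $ j" (is "DERIV _ 0 :> ?D")
        by (rule dir_deriv[OF F bl1])
      have e: "(\<lambda>t. fst (elastoF A B C Dn l sig rho ((a, b, c) + t *\<^sub>R x)) $ j)
         = (\<lambda>t. (A *v a + B *v b + l) $ j + t * (A *v da + B *v db) $ j)" (is "_ = (\<lambda>t. ?R t)")
        unfolding line by (simp add: elastoF_def fun_eq_iff algebra_simps)
      have d2: "DERIV (\<lambda>t. (A *v a + B *v b + l) $ j + t * (A *v da + B *v db) $ j) 0 :> (A *v da + B *v db) $ j"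
        by (auto intro!: derivative_eq_intros)
      have d': "DERIV (\<lambda>t. ?R t) 0 :> ?D" unfolding e[symmetric] by (rule d)
      show ?thesis using DERIV_unique[OF d' d2] .
    qed
    have c2: "fst (snd (f' x)) $ j = (transpose B *v da + C *v db + Ddiag Dn dc) $ j" for j
    proof -
      have d: "DERIV (\<lambda>t. fst (snd (elastoF A B C Dn l sig rho ((a, b, c) + t *\<^sub>R x))) $ j) 0 :> fst (snd (f' x)) $ j" (is "DERIV _ 0 :> ?D")
        by (rule dir_deriv[OF F bl2])
      have e: "(\<lambda>t. fst (snd (elastoF A B C Dn l sig rho ((a, b, c) + t *\<^sub>R x))) $ j)
         = (\<lambda>t. (transpose B *v a + C *v b + Ddiag Dn c) $ j + t * (transpose B *v da + C *v db + Ddiag Dn dc) $ j)" (is "_ = (\<lambda>t. ?R t)")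
        unfolding line by (simp add: elastoF_def fun_eq_iff algebra_simps Ddiag_add Ddiag_scaleR vm_scaleR vm_add)
      have d2: "DERIV (\<lambda>t. (transpose B *v a + C *v b + Ddiag Dn c) $ j + t * (transpose B *v da + C *v db + Ddiag Dn dc) $ j) 0
          :> (transpose B *v da + C *v db + Ddiag Dn dc) $ j"
        by (auto intro!: derivative_eq_intros)
      have d': "DERIV (\<lambda>t. ?R t) 0 :> ?D" unfolding e[symmetric] by (rule d)
      show ?thesis using DERIV_unique[OF d' d2] .
    qed
    have c3: "snd (snd (f' x)) $ p = Ef rho sig tau b c db dc (fst p) (snd p)" for p
    proof -
      obtain i k where p: "p = (i, k)" by (cases p) auto
      have d: "DERIV (\<lambda>t. snd (snd (elastoF A B C Dn l sig rho ((a, b, c) + t *\<^sub>R x))) $ p) 0 :> snd (snd (f' x)) $ p"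
        by (rule dir_deriv[OF F bl3])
      have e: "(\<lambda>t. snd (snd (elastoF A B C Dn l sig rho ((a, b, c) + t *\<^sub>R x))) $ p)
         = (\<lambda>t. Sblk rho sig (b + t *\<^sub>R db) (c + t *\<^sub>R dc) i $ k)"
        unfolding line by (simp add: elastoF_def p)
      have d': "DERIV (\<lambda>t. Sblk rho sig (b + t *\<^sub>R db) (c + t *\<^sub>R dc) i $ k) 0 :> snd (snd (f' x)) $ p"
        unfolding e[symmetric] by (rule d)
      show ?thesis unfolding p fst_conv snd_conv tau_def
        by (rule S_deriv[OF sp d'[unfolded p] kinkc])
    qed
    show ?thesis unfolding Gf_def
      by (simp add: x prod_eq_iff vec_eq_iff c1[unfolded x] c2[unfolded x] c3[unfolded x])
  qed
  then show ?thesis using tc by blast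
qed


definition Eq where "Eq rho sig b c db dc i k = (c $ (i,k) * (((1 / norm (vrho rho b c i)) *\<^sub>R vrho rho b c i)
      \<bullet> (blk dc i + rho *\<^sub>R blk db i)) + (norm (vrho rho b c i) - sig i) * dc $ (i,k))"

lemma Ef_aff: "Ef rho sig tau b c db dc i k = tau i * Eq rho sig b c db dc i k - rho * sig i * db $ (i,k)"
  unfolding Ef_def Eq_def ..

definition Kset where
  "Kset A B C Dn rho sig b c = {L. \<exists>tau. tcond rho sig b c tau \<and> (\<forall>x. blinfun_apply L x = Gf A B C Dn rho sig tau b c x)}"

lemma Kset_convex: "convex (Kset A B C Dn rho sig b c)"
  unfolding convex_def
proof (intro ballI allI impI)
  fix L1 L2 and u v :: real
  assume L1: "L1 \<in> Kset A B C Dn rho sig b c" and L2: "L2 \<in> Kset A B C Dn rho sig b c"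
    and u: "0 \<le> u" and v: "0 \<le> v" and uv: "u + v = 1"
  obtain t1 where t1: "tcond rho sig b c t1" "\<forall>x. blinfun_apply L1 x = Gf A B C Dn rho sig t1 b c x"
    using L1 unfolding Kset_def by blast
  obtain t2 where t2: "tcond rho sig b c t2" "\<forall>x. blinfun_apply L2 x = Gf A B C Dn rho sig t2 b c x"
    using L2 unfolding Kset_def by blast
  define t where "t i = u * t1 i + v * t2 i" for i
  have vv: "v = 1 - u" using uv by simp
  have "tcond rho sig b c t"
    unfolding tcond_def
  proof
    fix i
    have a1: "0 \<le> t1 i" "t1 i \<le> 1" "0 \<le> t2 i" "t2 i \<le> 1" using t1(1) t2(1) unfolding tcond_def by auto
    have "u * t1 i \<le> u" using a1 u by (simp add: mult_left_le)
    moreover have "v * t2 i \<le> v" using a1 v by (simp add: mult_left_le)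
    ultimately show "0 \<le> t i \<and> t i \<le> 1 \<and> (norm (vrho rho b c i) < sig i \<longrightarrow> t i = 0) \<and> (sig i < norm (vrho rho b c i) \<longrightarrow> t i = 1)"
      using t1(1) t2(1) a1 u v uv unfolding tcond_def t_def by auto
  qed
  moreover have "\<forall>x. blinfun_apply (u *\<^sub>R L1 + v *\<^sub>R L2) x = Gf A B C Dn rho sig t b c x"
  proof
    fix x
    show "blinfun_apply (u *\<^sub>R L1 + v *\<^sub>R L2) x = Gf A B C Dn rho sig t b c x"
    proof -
      have "blinfun_apply (u *\<^sub>R L1 + v *\<^sub>R L2) x = u *\<^sub>R Gf A B C Dn rho sig t1 b c x + v *\<^sub>R Gf A B C Dn rho sig t2 b c x"
        by (simp add: blinfun.add_left blinfun.scaleR_left t1(2)[rule_format] t2(2)[rule_format] del: prod.collapse)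
      also have "\<dots> = Gf A B C Dn rho sig t b c x"
        unfolding vv t_def Gf_def
        by (simp add: prod_eq_iff vec_eq_iff Ef_aff algebra_simps)
      finally show ?thesis .
    qed
  qed
  ultimately show "u *\<^sub>R L1 + v *\<^sub>R L2 \<in> Kset A B C Dn rho sig b c"
    unfolding Kset_def by blast
qed


lemma blk_tendsto:
  fixes X :: "'a \<Rightarrow> real^('n::finite \<times> 'l::finite)"
  assumes a: "(X \<longlongrightarrow> x) F"
  shows "((\<lambda>k. blk (X k) i) \<longlongrightarrow> blk x i) F"
proof -
  have "linear (\<lambda>x::real^('n \<times> 'l). blk x i)"
    by (rule linearI) (simp_all add: blk_add blk_scaleR)
  then have "bounded_linear (\<lambda>x::real^('n \<times> 'l). blk x i)"
    using linear_conv_bounded_linear by blast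
  then show ?thesis using bounded_linear.tendsto a by blast
qed

lemma vrho_tendsto: "(X \<longlongrightarrow> b) F \<Longrightarrow> (Y \<longlongrightarrow> c) F \<Longrightarrow> ((\<lambda>k. vrho rho (X k) (Y k) i) \<longlongrightarrow> vrho rho b c i) F"
  unfolding vrho_def by (intro tendsto_intros blk_tendsto)

lemma lim_in_Kset:
  fixes A :: "real^'m::finite^'m" and B :: "real^('n::finite \<times> 'l::finite)^'m" and C :: "real^('n \<times> 'l)^('n \<times> 'l)"
    and Dn :: "'n \<Rightarrow> real" and l :: "real^'m" and sig :: "'n \<Rightarrow> real" and rho :: real
    and a :: "real^'m" and b c :: "real^('n \<times> 'l)"
  assumes sp: "\<And>i. sig i > 0"
    and xs: "xs \<longlonglongrightarrow> (a, b, c)"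
    and Fd: "\<forall>k. (elastoF A B C Dn l sig rho has_derivative blinfun_apply (Js k)) (at (xs k))"
    and Jl: "Js \<longlonglongrightarrow> J"
  shows "J \<in> Kset A B C Dn rho sig b c"
proof -
  define bs where "bs k = fst (snd (xs k))" for k
  define cs where "cs k = snd (snd (xs k))" for k
  have "\<forall>k. \<exists>tau. tcond rho sig (bs k) (cs k) tau \<and> (\<forall>x. blinfun_apply (Js k) x = Gf A B C Dn rho sig tau (bs k) (cs k) x)"
  proof
    fix k
    have "(elastoF A B C Dn l sig rho has_derivative blinfun_apply (Js k)) (at (fst (xs k), bs k, cs k))"
      using Fd unfolding bs_def cs_def by simp
    then show "\<exists>tau. tcond rho sig (bs k) (cs k) tau \<and> (\<forall>x. blinfun_apply (Js k) x = Gf A B C Dn rho sig tau (bs k) (cs k) x)"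
      by (rule deriv_char[OF sp])
  qed
  then obtain T where T: "\<And>k. tcond rho sig (bs k) (cs k) (T k)"
    "\<And>k x. blinfun_apply (Js k) x = Gf A B C Dn rho sig (T k) (bs k) (cs k) x"
    by metis
  define tv :: "nat \<Rightarrow> real^'n" where "tv k = (\<chi> i. T k i)" for k
  have "tv k \<in> cbox 0 1" for k
    using T(1)[of k] unfolding tcond_def tv_def by (simp add: mem_box_cart)
  then obtain lv r where lv: "lv \<in> cbox 0 1" and r: "strict_mono r" and tvl: "(tv \<circ> r) \<longlonglongrightarrow> lv"
    using compact_imp_seq_compact[OF compact_cbox] unfolding seq_compact_def by metis
  define tau where "tau i = lv $ i" for i
  have Tl: "(\<lambda>k. T (r k) i) \<longlonglongrightarrow> tau i" for i
    using tendsto_vec_nth[OF tvl, of i] unfolding tau_def tv_def o_def by simp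
  have xsr: "(xs \<circ> r) \<longlonglongrightarrow> (a, b, c)" by (rule LIMSEQ_subseq_LIMSEQ[OF xs r])
  have bsl: "(\<lambda>k. bs (r k)) \<longlonglongrightarrow> b" unfolding bs_def
    using tendsto_fst[OF tendsto_snd[OF xsr]] by (simp add: o_def)
  have csl: "(\<lambda>k. cs (r k)) \<longlonglongrightarrow> c" unfolding cs_def
    using tendsto_snd[OF tendsto_snd[OF xsr]] by (simp add: o_def)
  have vl: "(\<lambda>k. vrho rho (bs (r k)) (cs (r k)) i) \<longlonglongrightarrow> vrho rho b c i" for i
    by (rule vrho_tendsto[OF bsl csl])
  have nvl: "(\<lambda>k. norm (vrho rho (bs (r k)) (cs (r k)) i)) \<longlonglongrightarrow> norm (vrho rho b c i)" for i
    by (intro tendsto_intros vl)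
  have ev0: "eventually (\<lambda>k. T (r k) i = 0) sequentially" if "norm (vrho rho b c i) < sig i" for i
    using order_tendstoD(2)[OF nvl that] T(1) unfolding tcond_def by (auto elim!: eventually_mono)
  have ev1: "eventually (\<lambda>k. T (r k) i = 1) sequentially" if "norm (vrho rho b c i) > sig i" for i
    using order_tendstoD(1)[OF nvl that] T(1) unfolding tcond_def by (auto elim!: eventually_mono)
  have tc: "tcond rho sig b c tau"
    unfolding tcond_def
  proof (intro allI conjI impI)
    fix i
    show "0 \<le> tau i" using LIMSEQ_le_const[OF Tl] T(1) unfolding tcond_def by blast
    show "tau i \<le> 1" using LIMSEQ_le_const2[OF Tl] T(1) unfolding tcond_def by blast
    show "tau i = 0" if "norm (vrho rho b c i) < sig i"
      using LIMSEQ_unique[OF Tl tendsto_eventually[OF ev0[OF that]]] .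
    show "tau i = 1" if "norm (vrho rho b c i) > sig i"
      using LIMSEQ_unique[OF Tl tendsto_eventually[OF ev1[OF that]]] .
  qed
  have "blinfun_apply J x = Gf A B C Dn rho sig tau b c x" for x
  proof -
    obtain da db dc where x: "x = (da, db, dc)" by (cases x) auto
    have Jx: "(\<lambda>k. blinfun_apply (Js (r k)) x) \<longlonglongrightarrow> blinfun_apply J x"
      using blinfun.tendsto[OF LIMSEQ_subseq_LIMSEQ[OF Jl r] tendsto_const, of x] by (simp add: o_def)
    have e: "blinfun_apply (Js (r k)) x = Gf A B C Dn rho sig (T (r k)) (bs (r k)) (cs (r k)) x" for k
      by (rule T(2))
    have J1: "fst (blinfun_apply J x) = fst (Gf A B C Dn rho sig tau b c x)"
    proof -
      have "(\<lambda>k. fst (blinfun_apply (Js (r k)) x)) \<longlonglongrightarrow> fst (blinfun_apply J x)"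
        by (intro tendsto_intros Jx)
      moreover have "(\<lambda>k. fst (blinfun_apply (Js (r k)) x)) \<longlonglongrightarrow> fst (Gf A B C Dn rho sig tau b c x)"
        unfolding e by (simp add: Gf_def)
      ultimately show ?thesis by (rule LIMSEQ_unique)
    qed
    have J2: "fst (snd (blinfun_apply J x)) = fst (snd (Gf A B C Dn rho sig tau b c x))"
    proof -
      have "(\<lambda>k. fst (snd (blinfun_apply (Js (r k)) x))) \<longlonglongrightarrow> fst (snd (blinfun_apply J x))"
        by (intro tendsto_intros Jx)
      moreover have "(\<lambda>k. fst (snd (blinfun_apply (Js (r k)) x))) \<longlonglongrightarrow> fst (snd (Gf A B C Dn rho sig tau b c x))"
        unfolding e by (simp add: Gf_def)
      ultimately show ?thesis by (rule LIMSEQ_unique)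
    qed
    have J3: "snd (snd (blinfun_apply J x)) $ p = snd (snd (Gf A B C Dn rho sig tau b c x)) $ p" for p
    proof -
      obtain i k where p: "p = (i, k)" by (cases p) auto
      have "(\<lambda>n. snd (snd (blinfun_apply (Js (r n)) x)) $ p) \<longlonglongrightarrow> snd (snd (blinfun_apply J x)) $ p"
        by (intro tendsto_intros Jx)
      moreover have "(\<lambda>n. snd (snd (blinfun_apply (Js (r n)) x)) $ p) \<longlonglongrightarrow> snd (snd (Gf A B C Dn rho sig tau b c x)) $ p"
      proof (cases "norm (vrho rho b c i) < sig i")
        case True
        have t0: "tau i = 0" using tc True unfolding tcond_def by blast
        show ?thesis
          unfolding e
          by (rule tendsto_eventually, use ev0[OF True] in \<open>auto elim!: eventually_mono simp: Gf_def x p Ef_def t0\<close>)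
      next
        case False
        then have v0: "norm (vrho rho b c i) \<noteq> 0" using sp[of i] by linarith
        show ?thesis
          unfolding e unfolding Gf_def x p Ef_def
          by (simp, intro tendsto_intros Tl vl tendsto_vec_nth csl v0)
      qed
      ultimately show ?thesis by (rule LIMSEQ_unique)
    qed
    show ?thesis using J1 J2 J3 by (simp add: prod_eq_iff vec_eq_iff)
  qed
  then show ?thesis using tc unfolding Kset_def by blast
qed


theorem lemma4p1:
  fixes A :: "real^'m::finite^'m" and B :: "real^('n::finite \<times> 'l::finite)^'m" and C :: "real^('n \<times> 'l)^('n \<times> 'l)"
    and Dn :: "'n \<Rightarrow> real" and l :: "real^'m" and sig :: "'n \<Rightarrow> real" and rho :: real
    and a :: "real^'m" and b c :: "real^('n \<times> 'l)"
    and H :: "((real^'m) \<times> (real^('n \<times> 'l)) \<times> (real^('n \<times> 'l))) \<Rightarrow>\<^sub>L ((real^'m) \<times> (real^('n \<times> 'l)) \<times> (real^('n \<times> 'l)))"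
  assumes rho_pos: "rho > 0"
    and sigma_pos: "\<And>i. sig i > 0"
    and D_pos: "\<And>i. Dn i > 0"
    and H: "H \<in> clarke_jacobian (elastoF A B C Dn l sig rho) (a, b, c)"
  shows "\<exists>tau :: 'n \<Rightarrow> real.
     (\<forall>i. 0 \<le> tau i \<and> tau i \<le> 1
        \<and> (norm (vrho rho b c i) < sig i \<longrightarrow> tau i = 0)
        \<and> (norm (vrho rho b c i) > sig i \<longrightarrow> tau i = 1)) \<and>
     (\<forall>da db dc. blinfun_apply H (da, db, dc) =
        (A *v da + B *v db,
         transpose B *v da + C *v db + Ddiag Dn dc,
         (\<chi> p. let i = fst p; k = snd p in
            (((tau i * rho) *\<^sub>R dyad (blk c i) ((1 / norm (vrho rho b c i)) *\<^sub>R vrho rho b c i)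
               - (rho * sig i) *\<^sub>R mat 1) *v blk db i) $ k
          + ((tau i *\<^sub>R (dyad (blk c i) ((1 / norm (vrho rho b c i)) *\<^sub>R vrho rho b c i)
               + (norm (vrho rho b c i) - sig i) *\<^sub>R mat 1)) *v blk dc i) $ k)))"
proof -
  have sub: "{J. \<exists>xs Js. (xs \<longlonglongrightarrow> (a, b, c)) \<and>
          (\<forall>k. (elastoF A B C Dn l sig rho has_derivative blinfun_apply (Js k)) (at (xs k))) \<and>
          (Js \<longlonglongrightarrow> J)} \<subseteq> Kset A B C Dn rho sig b c"
    using lim_in_Kset[of sig, OF sigma_pos] by blast
  have "H \<in> Kset A B C Dn rho sig b c"
    using H hull_minimal[of _ _ convex, OF sub Kset_convex] unfolding clarke_jacobian_def by blast
  then obtain tau where tc: "tcond rho sig b c tau"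
    and Hx: "\<And>x. blinfun_apply H x = Gf A B C Dn rho sig tau b c x"
    unfolding Kset_def by blast
  show ?thesis
  proof (rule exI, rule conjI)
    show "\<forall>i. 0 \<le> tau i \<and> tau i \<le> 1
        \<and> (norm (vrho rho b c i) < sig i \<longrightarrow> tau i = 0)
        \<and> (norm (vrho rho b c i) > sig i \<longrightarrow> tau i = 1)"
      using tc unfolding tcond_def .
  next
    show "\<forall>da db dc. blinfun_apply H (da, db, dc) =
        (A *v da + B *v db,
         transpose B *v da + C *v db + Ddiag Dn dc,
         (\<chi> p. let i = fst p; k = snd p in
            (((tau i * rho) *\<^sub>R dyad (blk c i) ((1 / norm (vrho rho b c i)) *\<^sub>R vrho rho b c i)
               - (rho * sig i) *\<^sub>R mat 1) *v blk db i) $ k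
          + ((tau i *\<^sub>R (dyad (blk c i) ((1 / norm (vrho rho b c i)) *\<^sub>R vrho rho b c i)
               + (norm (vrho rho b c i) - sig i) *\<^sub>R mat 1)) *v blk dc i) $ k))"
      unfolding Hx Gf_def Let_def formula_eq by simp
  qed
qed

end
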